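(* Let $\delta:\,]0,+\infty[\to\mathbb R$ be nonnegative, bounded and continuously differentiable with $\lim_{r\downarrow0}\sqrt r\,\delta'(r)=0$ (so that $u\mapsto\delta(u^2)$ extends to a continuously differentiable function on $\mathbb R$). Consider the system $$u''+\delta(u^2)u^2u'=\frac{Eu}{2},\qquad E'=-4\delta(u^2)(u')^2,$$ and the invariant manifold $\mathcal M=\{(u,u',E)\in\mathbb R\times\mathbb R\times\mathbb R:\ 2(u')^2-Eu^2=1\}$. Let $(u,E):\,]A,0]\to\mathbb R^2$ (with $-\infty\le A<0$) be a solution of this system lying on $\mathcal M$ and maximal to the left. Then $\int_A^0u(s)^2\,ds=+\infty$.
   Context: Primes denote derivatives with respect to the independent variable $s$. Maximal to the left means the solution admits no extension to an interval $]\hat A,0]$ with $\hat A<A$. *)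

theory Defs
  imports "HOL-Analysis.Analysis"
begin

text \<open>The continuous extension of u \<mapsto> delta(u^2) to all of the reals:
  at u = 0 it takes the value lim_{r -> 0+} delta(r).\<close>
definition dsq :: "(real \<Rightarrow> real) \<Rightarrow> real \<Rightarrow> real" where
  "dsq \<delta> x = (if x = 0 then Lim (at_right 0) \<delta> else \<delta> (x\<^sup>2))"

definition lint :: "ereal \<Rightarrow> real set" where
  "lint A = {s. A < ereal s \<and> s \<le> 0}"

definition ode_sol :: "(real \<Rightarrow> real) \<Rightarrow> ereal \<Rightarrow> (real \<Rightarrow> real) \<Rightarrow> (real \<Rightarrow> real)
    \<Rightarrow> (real \<Rightarrow> real) \<Rightarrow> bool" where
  "ode_sol \<delta> A u u' E \<longleftrightarrow> A < 0 \<and>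
     (\<exists>u''. \<forall>s\<in>lint A.
        (u has_real_derivative u' s) (at s within lint A) \<and>
        (u' has_real_derivative u'' s) (at s within lint A) \<and>
        (E has_real_derivative (-4 * dsq \<delta> (u s) * (u' s)\<^sup>2)) (at s within lint A) \<and>
        u'' s + dsq \<delta> (u s) * (u s)\<^sup>2 * u' s = E s * u s / 2)"

definition maximal_left :: "(real \<Rightarrow> real) \<Rightarrow> ereal \<Rightarrow> (real \<Rightarrow> real) \<Rightarrow> (real \<Rightarrow> real) \<Rightarrow> bool" where
  "maximal_left \<delta> A u E \<longleftrightarrow>
     \<not> (\<exists>B v v' F. B < A \<and> ode_sol \<delta> B v v' F \<and> (\<forall>s\<in>lint A. v s = u s \<and> F s = E s))"

end

theory Submission
  imports Defs "HOL-Analysis.Analysis"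
begin
lemma delta_limit:
  fixes \<delta> \<delta>' :: "real \<Rightarrow> real"
  assumes nonneg: "\<forall>r>0. \<delta> r \<ge> 0"
    and deriv: "\<forall>r>0. (\<delta> has_real_derivative \<delta>' r) (at r)"
    and lim0: "((\<lambda>r. sqrt r * \<delta>' r) \<longlongrightarrow> 0) (at_right 0)"
  shows "\<exists>L. (\<delta> \<longlongrightarrow> L) (at_right 0)"
proof -
  have dcont: "isCont \<delta> r" if "r > 0" for r using deriv that DERIV_isCont by blast
  have "\<forall>\<^sub>F r in at_right 0. \<bar>sqrt r * \<delta>' r\<bar> < 1"
    using lim0 by (auto dest: order_tendstoD simp: tendsto_iff dist_real_def)
  then obtain r0 where r0: "r0 > 0" "\<And>r. 0 < r \<Longrightarrow> r < r0 \<Longrightarrow> \<bar>sqrt r * \<delta>' r\<bar> < 1"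
    by (auto simp: eventually_at_right_field)
  define k where "k r = \<delta> r + 2 * sqrt r" for r
  have kmono: "k x \<le> k y" if "0 < x" "x \<le> y" "y < r0" for x y
  proof (rule DERIV_nonneg_imp_increasing_open[OF \<open>x \<le> y\<close>])
    fix z assume z: "x < z" "z < y"
    have "(k has_real_derivative (\<delta>' z + 2 * (inverse (sqrt z) / 2))) (at z)"
    proof -
      have "((\<lambda>z. 2 * sqrt z) has_real_derivative 2 * (inverse (sqrt z) / 2)) (at z)"
        using z that by (intro DERIV_cmult DERIV_real_sqrt) auto
      moreover have "(\<delta> has_real_derivative \<delta>' z) (at z)" using deriv z that by auto
      ultimately show ?thesis unfolding k_def using DERIV_add by blast
    qed
    moreover have "\<delta>' z + 2 * (inverse (sqrt z) / 2) \<ge> 0"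
    proof -
      have sz: "sqrt z > 0" using z that by auto
      have "\<bar>sqrt z * \<delta>' z\<bar> < 1" using r0(2)[of z] z that by auto
      hence "sqrt z * \<delta>' z > -1" by linarith
      hence "\<delta>' z > - inverse (sqrt z)" using sz
        by (simp add: field_simps)
      thus ?thesis by simp
    qed
    ultimately show "\<exists>y. (k has_real_derivative y) (at z) \<and> 0 \<le> y" by blast
  next
    have "\<forall>z\<in>{x..y}. isCont k z"
      unfolding k_def using that dcont
      by (auto intro!: continuous_intros)
    thus "continuous_on {x..y} k" by (simp add: continuous_at_imp_continuous_on)
  qed
  have "(k \<longlongrightarrow> Inf (k ` ({0<..} \<inter> {0<..<r0}))) (at 0 within ({0<..} \<inter> {0<..<r0}))"
    by (rule Lim_right_bound[where K=0]) (use kmono in \<open>auto simp: nonneg k_def\<close>)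
  moreover have "at (0::real) within ({0<..} \<inter> {0<..<r0}) = at_right 0"
    by (rule at_within_nhd[where S="{-r0<..<r0}"]) (use r0 in auto)
  ultimately have kl: "(k \<longlongrightarrow> Inf (k ` ({0<..} \<inter> {0<..<r0}))) (at_right 0)" by simp
  have "((\<lambda>r. k r - 2 * sqrt r) \<longlongrightarrow> Inf (k ` ({0<..} \<inter> {0<..<r0})) - 2 * sqrt 0) (at_right 0)"
    by (intro tendsto_intros kl)
  thus ?thesis unfolding k_def by auto
qed

lemma lip_mvt:
  fixes f f' :: "real \<Rightarrow> real"
  assumes "a \<le> b" "continuous_on {a..b} f"
    "\<And>z. a < z \<Longrightarrow> z < b \<Longrightarrow> (f has_real_derivative f' z) (at z)"
    "\<And>z. a < z \<Longrightarrow> z < b \<Longrightarrow> \<bar>f' z\<bar> \<le> K"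
  shows "\<bar>f b - f a\<bar> \<le> K * (b - a)"
proof (cases "a = b")
  case True thus ?thesis by simp
next
  case False
  hence ab: "a < b" using assms by simp
  obtain l z where z: "a < z" "z < b" "DERIV f z :> l" "f b - f a = (b - a) * l"
    using MVT[OF ab assms(2)] assms(3) real_differentiable_def by meson
  have "l = f' z" using DERIV_unique[OF z(3) assms(3)[OF z(1,2)]] .
  hence "\<bar>f b - f a\<bar> = (b - a) * \<bar>f' z\<bar>" using z ab by (simp add: abs_mult)
  also have "\<dots> \<le> (b - a) * K" using assms(4)[OF z(1,2)] ab by (intro mult_left_mono) auto
  finally show ?thesis by (simp add: mult.commute)
qed

locale dsys =
  fixes \<delta> \<delta>' :: "real \<Rightarrow> real"
  assumes nonneg: "\<forall>r>0. \<delta> r \<ge> 0"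
    and bdd: "bounded (\<delta> ` {0<..})"
    and deriv: "\<forall>r>0. (\<delta> has_real_derivative \<delta>' r) (at r)"
    and cont: "continuous_on {0<..} \<delta>'"
    and lim0: "((\<lambda>r. sqrt r * \<delta>' r) \<longlongrightarrow> 0) (at_right 0)"
begin

lemma dcont: "r > 0 \<Longrightarrow> isCont \<delta> r"
  using deriv DERIV_isCont by blast

lemma Ltend: "(\<delta> \<longlongrightarrow> dsq \<delta> 0) (at_right 0)"
proof -
  obtain L where "(\<delta> \<longlongrightarrow> L) (at_right 0)"
    using delta_limit[OF nonneg deriv lim0] by blast
  moreover hence "Lim (at_right 0) \<delta> = L" by (intro tendsto_Lim) auto
  ultimately show ?thesis by (simp add: dsq_def)
qed

lemma Mex: "\<exists>M. \<forall>r>0. \<bar>\<delta> r\<bar> \<le> M"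
  using bdd by (auto simp: bounded_iff)

lemma g_bounds: "\<exists>M\<ge>0. \<forall>x. 0 \<le> dsq \<delta> x \<and> dsq \<delta> x \<le> M"
proof -
  obtain M where M: "\<forall>r>0. \<bar>\<delta> r\<bar> \<le> M" using Mex by blast
  have ev: "\<forall>\<^sub>F r in at_right (0::real). r > 0" by (simp add: eventually_at_right_less)
  have e1: "\<forall>\<^sub>F r in at_right 0. 0 \<le> \<delta> r" using ev by eventually_elim (simp add: nonneg)
  have e2: "\<forall>\<^sub>F r in at_right 0. \<delta> r \<le> M" using ev by eventually_elim (use M in force)
  have L0: "0 \<le> dsq \<delta> 0"
    by (rule tendsto_lowerbound[OF Ltend e1]) simp
  have LM: "dsq \<delta> 0 \<le> M"
    by (rule tendsto_upperbound[OF Ltend e2]) simp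
  have "\<forall>x. 0 \<le> dsq \<delta> x \<and> dsq \<delta> x \<le> M"
  proof
    fix x show "0 \<le> dsq \<delta> x \<and> dsq \<delta> x \<le> M"
    proof (cases "x = 0")
      case True thus ?thesis using L0 LM by simp
    next
      case False hence "x\<^sup>2 > 0" by simp
      thus ?thesis using nonneg M by (force simp: dsq_def False)
    qed
  qed
  moreover have "M \<ge> 0" using M[rule_format, of 1] by simp
  ultimately show ?thesis by blast
qed

lemma g_even: "dsq \<delta> \<bar>x\<bar> = dsq \<delta> x"
  by (simp add: dsq_def)

lemma g_deriv: "x \<noteq> 0 \<Longrightarrow> (dsq \<delta> has_real_derivative \<delta>' (x\<^sup>2) * (2 * x)) (at x)"
proof -
  assume x: "x \<noteq> 0"
  have "((\<lambda>y. \<delta> (y\<^sup>2)) has_real_derivative \<delta>' (x\<^sup>2) * (2 * x)) (at x)"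
  proof (rule DERIV_chain2[of \<delta>])
    show "(\<delta> has_real_derivative \<delta>' (x\<^sup>2)) (at (x\<^sup>2))" using deriv x by simp
    show "((\<lambda>y. y\<^sup>2) has_real_derivative 2 * x) (at x)"
      by (auto intro!: derivative_eq_intros)
  qed
  thus ?thesis
    by (rule has_field_derivative_transform_within_open[where S="-{0}"]) (use x in \<open>auto simp: dsq_def\<close>)
qed

lemma g_cont: "isCont (dsq \<delta>) x"
proof (cases "x = 0")
  case False thus ?thesis using g_deriv DERIV_isCont by blast
next
  case True
  have "filterlim (\<lambda>y::real. y\<^sup>2) (at_right 0) (at 0)"
  proof (rule tendsto_imp_filterlim_at_right)
    have "((\<lambda>y::real. y\<^sup>2) \<longlongrightarrow> 0\<^sup>2) (at 0)" by (intro tendsto_intros)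
    thus "((\<lambda>y::real. y\<^sup>2) \<longlongrightarrow> 0) (at 0)" by simp
    show "\<forall>\<^sub>F y in at (0::real). 0 < y\<^sup>2" by (auto simp: eventually_at_filter)
  qed
  hence "((\<lambda>y. \<delta> (y\<^sup>2)) \<longlongrightarrow> dsq \<delta> 0) (at 0)"
    using Ltend filterlim_compose by blast
  hence "(dsq \<delta> \<longlongrightarrow> dsq \<delta> 0) (at 0)"
    by (rule tendsto_cong[THEN iffD1, rotated]) (auto simp: eventually_at_filter dsq_def)
  thus ?thesis using True by (simp add: isCont_def)
qed

lemma g_cont_on: "continuous_on S (dsq \<delta>)"
  by (simp add: continuous_at_imp_continuous_on g_cont)

lemma g_lip: assumes "R > 0" shows "\<exists>K\<ge>0. \<forall>x y. \<bar>x\<bar> \<le> R \<longrightarrow> \<bar>y\<bar> \<le> R \<longrightarrow> \<bar>dsq \<delta> x - dsq \<delta> y\<bar> \<le> K * \<bar>x - y\<bar>"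
proof -
  have "\<forall>\<^sub>F r in at_right 0. \<bar>sqrt r * \<delta>' r\<bar> < 1"
    using lim0 by (auto dest: order_tendstoD simp: tendsto_iff dist_real_def)
  then obtain r0 where r0: "r0 > 0" "\<And>r. 0 < r \<Longrightarrow> r < r0 \<Longrightarrow> \<bar>sqrt r * \<delta>' r\<bar> < 1"
    by (auto simp: eventually_at_right_field)
  have "bounded (\<delta>' ` {r0..R\<^sup>2})"
    by (intro compact_imp_bounded compact_continuous_image continuous_on_subset[OF cont])
       (use r0 in auto)
  then obtain K1 where K1: "\<forall>r\<in>{r0..R\<^sup>2}. \<bar>\<delta>' r\<bar> \<le> K1"
    by (auto simp: bounded_iff)
  define K where "K = 2 + 2 * R * \<bar>K1\<bar>"
  have Kb: "\<bar>\<delta>' (x\<^sup>2) * (2 * x)\<bar> \<le> K" if "x \<noteq> 0" "\<bar>x\<bar> \<le> R" for x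
  proof -
    have sx: "sqrt (x\<^sup>2) = \<bar>x\<bar>" by simp
    have eq: "\<bar>\<delta>' (x\<^sup>2) * (2 * x)\<bar> = 2 * \<bar>sqrt (x\<^sup>2) * \<delta>' (x\<^sup>2)\<bar>"
      by (simp only: sx) (simp add: abs_mult)
    show ?thesis
    proof (cases "x\<^sup>2 < r0")
      case True
      hence "\<bar>sqrt (x\<^sup>2) * \<delta>' (x\<^sup>2)\<bar> < 1" using r0(2)[of "x\<^sup>2"] that by simp
      moreover have "R * \<bar>K1\<bar> \<ge> 0" using assms by simp
      ultimately show ?thesis unfolding eq K_def by linarith
    next
      case False
      have "\<bar>x\<bar>\<^sup>2 \<le> R\<^sup>2" using that by (intro power_mono) auto
      hence "x\<^sup>2 \<le> R\<^sup>2" by simp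
      hence "\<bar>\<delta>' (x\<^sup>2)\<bar> \<le> K1" using K1 False by auto
      hence "\<bar>x\<bar> * \<bar>\<delta>' (x\<^sup>2)\<bar> \<le> R * \<bar>K1\<bar>"
        using that by (intro mult_mono) auto
      thus ?thesis unfolding eq K_def by (simp only: sx abs_mult)
    qed
  qed
  have main: "\<bar>dsq \<delta> x - dsq \<delta> y\<bar> \<le> K * (x - y)" if "\<bar>x\<bar> \<le> R" "\<bar>y\<bar> \<le> R" "y \<le> x" for x y
  proof -
    have seg: "\<bar>dsq \<delta> b - dsq \<delta> a\<bar> \<le> K * (b - a)"
      if "a \<le> b" "\<bar>a\<bar> \<le> R" "\<bar>b\<bar> \<le> R" "\<not> (a < 0 \<and> 0 < b)" for a b
    proof (rule lip_mvt[OF \<open>a \<le> b\<close> g_cont_on])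
      fix z assume z: "a < z" "z < b"
      hence "z \<noteq> 0" "\<bar>z\<bar> \<le> R" using that by auto
      thus "(dsq \<delta> has_real_derivative \<delta>' (z\<^sup>2) * (2 * z)) (at z)" "\<bar>\<delta>' (z\<^sup>2) * (2 * z)\<bar> \<le> K"
        using g_deriv Kb by auto
    qed
    show ?thesis
    proof (cases "y < 0 \<and> 0 < x")
      case True
      have "\<bar>dsq \<delta> x - dsq \<delta> 0\<bar> \<le> K * (x - 0)" using seg[of 0 x] True that assms by auto
      moreover have "\<bar>dsq \<delta> 0 - dsq \<delta> y\<bar> \<le> K * (0 - y)" using seg[of y 0] True that assms by auto
      ultimately show ?thesis by (simp add: algebra_simps)
    next
      case False thus ?thesis using seg[of y x] that by auto
    qed
  qed
  have "K \<ge> 0" unfolding K_def using assms by simp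
  moreover have "\<forall>x y. \<bar>x\<bar> \<le> R \<longrightarrow> \<bar>y\<bar> \<le> R \<longrightarrow> \<bar>dsq \<delta> x - dsq \<delta> y\<bar> \<le> K * \<bar>x - y\<bar>"
  proof (intro allI impI)
    fix x y :: real assume xy: "\<bar>x\<bar> \<le> R" "\<bar>y\<bar> \<le> R"
    show "\<bar>dsq \<delta> x - dsq \<delta> y\<bar> \<le> K * \<bar>x - y\<bar>"
    proof (cases "y \<le> x")
      case True thus ?thesis using main[OF xy True] by simp
    next
      case False thus ?thesis using main[OF xy(2,1)] by (simp add: abs_minus_commute)
    qed
  qed
  ultimately show ?thesis by blast
qed

end




lemma picard_aux:
  fixes G :: "real \<Rightarrow> 'a::euclidean_space" and a h :: real
  assumes h: "h > 0" and Gc: "continuous_on UNIV G"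
  shows "continuous_on UNIV (\<lambda>t. integral {max (a - h) (min a t)..a} G)"
proof -
  define c where "c t = max (a - h) (min a t)" for t
  have cin: "c t \<in> {a-h..a}" for t using h by (auto simp: c_def)
  have int: "G integrable_on {a-h..a}"
    by (rule integrable_continuous_real) (rule continuous_on_subset[OF Gc], simp)
  have eq: "integral {c t..a} G = integral {a-h..a} G - integral {a-h..c t} G" for t
  proof -
    have "integral {a-h..c t} G + integral {c t..a} G = integral {a-h..a} G"
      by (rule Henstock_Kurzweil_Integration.integral_combine) (use cin[of t] int in auto)
    thus ?thesis by (simp add: algebra_simps)
  qed
  have "continuous_on UNIV (\<lambda>t. integral {a-h..c t} G)"
  proof (rule continuous_on_compose2[OF indefinite_integral_continuous_1[OF int]])
    show "continuous_on UNIV c" unfolding c_def by (intro continuous_intros)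
    show "c ` UNIV \<subseteq> {a-h..a}" using cin by auto
  qed
  hence "continuous_on UNIV (\<lambda>t. integral {a-h..a} G - integral {a-h..c t} G)"
    by (intro continuous_intros)
  hence "continuous_on UNIV (\<lambda>t. integral {c t..a} G)" by (simp add: eq)
  thus ?thesis by (simp add: c_def)
qed

lemma picard_back:
  fixes f :: "'a::euclidean_space \<Rightarrow> 'a" and x0 :: 'a and a r L B :: real
  assumes r: "r > 0"
    and lip: "\<And>x y. x \<in> cball x0 r \<Longrightarrow> y \<in> cball x0 r \<Longrightarrow> norm (f x - f y) \<le> L * norm (x - y)"
    and bnd: "\<And>x. x \<in> cball x0 r \<Longrightarrow> norm (f x) \<le> B"
  shows "\<exists>h>0. \<exists>X. X a = x0 \<and> (\<forall>t\<in>{a-h..a}. (X has_vector_derivative f (X t)) (at t within {a-h..a}))"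
proof -
  define P where "P = closest_point (cball x0 r)"
  have Pin: "P x \<in> cball x0 r" for x
    unfolding P_def by (rule closest_point_in_set) (use r in auto)
  have Pid: "P x = x" if "x \<in> cball x0 r" for x
    unfolding P_def using that by (rule closest_point_self)
  have Plip: "dist (P x) (P y) \<le> dist x y" for x y
    unfolding P_def by (rule closest_point_lipschitz) (use r in auto)
  define fp where "fp x = f (P x)" for x
  define L' where "L' = max L 1"
  define B' where "B' = max B 1"
  have L'pos: "L' > 0" and B'pos: "B' > 0" by (auto simp: L'_def B'_def)
  have fplip: "norm (fp x - fp y) \<le> L' * norm (x - y)" for x y
  proof -
    have "norm (fp x - fp y) \<le> L * norm (P x - P y)" unfolding fp_def by (rule lip[OF Pin Pin])
    also have "\<dots> \<le> L' * norm (P x - P y)" by (intro mult_right_mono) (auto simp: L'_def)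
    also have "\<dots> \<le> L' * norm (x - y)" using Plip[of x y] L'pos by (intro mult_left_mono) (auto simp: dist_norm)
    finally show ?thesis .
  qed
  have fpb: "norm (fp x) \<le> B'" for x using bnd[OF Pin, of x] by (auto simp: fp_def B'_def)
  have fpc: "continuous_on UNIV fp"
  proof (rule lipschitz_on_continuous_on)
    show "L'-lipschitz_on UNIV fp" using fplip L'pos
      by (auto simp: lipschitz_on_def dist_norm)
  qed
  define h where "h = min (r / B') (1 / (2 * L'))"
  have hpos: "h > 0" using r B'pos L'pos by (auto simp: h_def)
  have hB: "B' * h \<le> r" using B'pos by (auto simp: h_def field_simps min_def)
  have hL: "L' * h \<le> 1/2" using L'pos by (auto simp: h_def field_simps min_def)
  define c where "c t = max (a - h) (min a t)" for t
  have cin: "c t \<in> {a-h..a}" for t using hpos by (auto simp: c_def)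
  define T where "T X = (\<lambda>t. x0 - integral {c t..a} (\<lambda>s. fp (X s)))" for X :: "real \<Rightarrow> 'a"
  have Tbc: "T (apply_bcontfun X) \<in> bcontfun" for X :: "real \<Rightarrow>\<^sub>C 'a"
  proof -
    have Gc: "continuous_on UNIV (\<lambda>s. fp (apply_bcontfun X s))"
      by (rule continuous_on_compose2[OF fpc]) auto
    have "continuous_on UNIV (T (apply_bcontfun X))"
      unfolding T_def c_def by (intro continuous_intros picard_aux[OF hpos Gc])
    moreover have "norm (T (apply_bcontfun X) t) \<le> norm x0 + B' * h" for t
    proof -
      have "norm (integral {c t..a} (\<lambda>s. fp (apply_bcontfun X s))) \<le> B' * (a - c t)"
        by (rule integral_bound) (use cin[of t] fpb in \<open>auto intro: continuous_on_subset[OF Gc]\<close>)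
      also have "\<dots> \<le> B' * h" using cin[of t] B'pos by (intro mult_left_mono) auto
      finally show ?thesis unfolding T_def by (meson norm_triangle_ineq4 order_trans add_left_mono)
    qed
    hence "bounded (range (T (apply_bcontfun X)))"
      by (auto simp: bounded_iff)
    ultimately show ?thesis by (simp add: bcontfun_def)
  qed
  define T' where "T' X = Bcontfun (T (apply_bcontfun X))" for X :: "real \<Rightarrow>\<^sub>C 'a"
  have T'app: "apply_bcontfun (T' X) = T (apply_bcontfun X)" for X
    unfolding T'_def using Tbc[of X] by (simp add: Bcontfun_inverse)
  have contr: "dist (T' X) (T' Y) \<le> (1/2) * dist X Y" for X Y
  proof (rule dist_bound)
    fix t
    have GXc: "continuous_on UNIV (\<lambda>s. fp (apply_bcontfun X s))"
      by (rule continuous_on_compose2[OF fpc]) auto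
    have GYc: "continuous_on UNIV (\<lambda>s. fp (apply_bcontfun Y s))"
      by (rule continuous_on_compose2[OF fpc]) auto
    have iX: "(\<lambda>s. fp (apply_bcontfun X s)) integrable_on {c t..a}"
      by (rule integrable_continuous_real) (rule continuous_on_subset[OF GXc], simp)
    have iY: "(\<lambda>s. fp (apply_bcontfun Y s)) integrable_on {c t..a}"
      by (rule integrable_continuous_real) (rule continuous_on_subset[OF GYc], simp)
    have "dist (T' X t) (T' Y t) = norm (integral {c t..a} (\<lambda>s. fp (apply_bcontfun X s) - fp (apply_bcontfun Y s)))"
      unfolding T'app T_def dist_norm integral_diff[OF iX iY] by (simp add: norm_minus_commute)
    also have "\<dots> \<le> (L' * dist X Y) * (a - c t)"
    proof (rule integral_bound)
      show "c t \<le> a" using cin[of t] by auto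
      show "continuous_on {c t..a} (\<lambda>s. fp (apply_bcontfun X s) - fp (apply_bcontfun Y s))"
        by (intro continuous_intros continuous_on_subset[OF GXc] continuous_on_subset[OF GYc]) auto
      fix s
      have "norm (fp (apply_bcontfun X s) - fp (apply_bcontfun Y s)) \<le> L' * norm (apply_bcontfun X s - apply_bcontfun Y s)"
        by (rule fplip)
      also have "\<dots> \<le> L' * dist X Y"
        using dist_bounded[of X s Y] L'pos by (intro mult_left_mono) (auto simp: dist_norm)
      finally show "norm (fp (apply_bcontfun X s) - fp (apply_bcontfun Y s)) \<le> L' * dist X Y" .
    qed
    also have "\<dots> \<le> (L' * dist X Y) * h"
      using cin[of t] L'pos by (intro mult_left_mono) auto
    also have "\<dots> = (L' * h) * dist X Y" by simp
    also have "\<dots> \<le> (1/2) * dist X Y" using hL by (intro mult_right_mono) auto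
    finally show "dist (T' X t) (T' Y t) \<le> (1/2) * dist X Y" .
  qed
  obtain X where X: "T' X = X"
    using banach_fix_type[of "1/2" T'] contr by auto
  define Xf where "Xf = apply_bcontfun X"
  have Xfeq: "Xf t = x0 - integral {c t..a} (\<lambda>s. fp (Xf s))" for t
    using arg_cong[OF X, of apply_bcontfun] unfolding T'app Xf_def T_def by metis
  have Gc: "continuous_on UNIV (\<lambda>s. fp (Xf s))"
    unfolding Xf_def by (rule continuous_on_compose2[OF fpc]) auto
  have int: "(\<lambda>s. fp (Xf s)) integrable_on {a-h..a}"
    by (rule integrable_continuous_real) (rule continuous_on_subset[OF Gc], simp)
  have ct: "c t = t" if "t \<in> {a-h..a}" for t using that by (auto simp: c_def)
  have Xa: "Xf a = x0" using Xfeq[of a] ct[of a] hpos by simp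
  have Xin: "Xf t \<in> cball x0 r" if "t \<in> {a-h..a}" for t
  proof -
    have "norm (integral {t..a} (\<lambda>s. fp (Xf s))) \<le> B' * (a - t)"
      by (rule integral_bound) (use that fpb in \<open>auto intro: continuous_on_subset[OF Gc]\<close>)
    also have "\<dots> \<le> B' * h" using that B'pos by (intro mult_left_mono) auto
    finally have "norm (x0 - Xf t) \<le> r" using Xfeq[of t] ct[OF that] hB by simp
    thus ?thesis by (simp add: dist_norm)
  qed
  have Xeq2: "Xf t = x0 - integral {a-h..a} (\<lambda>s. fp (Xf s)) + integral {a-h..t} (\<lambda>s. fp (Xf s))"
    if "t \<in> {a-h..a}" for t
  proof -
    have "integral {a-h..t} (\<lambda>s. fp (Xf s)) + integral {t..a} (\<lambda>s. fp (Xf s)) = integral {a-h..a} (\<lambda>s. fp (Xf s))"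
      by (rule Henstock_Kurzweil_Integration.integral_combine) (use that int in auto)
    hence e: "integral {t..a} (\<lambda>s. fp (Xf s)) = integral {a-h..a} (\<lambda>s. fp (Xf s)) - integral {a-h..t} (\<lambda>s. fp (Xf s))"
      by (metis add_diff_cancel_left')
    have "Xf t = x0 - integral {t..a} (\<lambda>s. fp (Xf s))" using Xfeq[of t] ct[OF that] by simp
    also have "\<dots> = x0 - integral {a-h..a} (\<lambda>s. fp (Xf s)) + integral {a-h..t} (\<lambda>s. fp (Xf s))"
      unfolding e by (simp add: algebra_simps)
    finally show ?thesis .
  qed
  have "(Xf has_vector_derivative f (Xf t)) (at t within {a-h..a})" if t: "t \<in> {a-h..a}" for t
  proof -
    have "((\<lambda>t. x0 - integral {a-h..a} (\<lambda>s. fp (Xf s)) + integral {a-h..t} (\<lambda>s. fp (Xf s)))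
        has_vector_derivative (0 + fp (Xf t))) (at t within {a-h..a})"
      by (intro derivative_intros integral_has_vector_derivative continuous_on_subset[OF Gc] t) auto
    hence "((\<lambda>t. x0 - integral {a-h..a} (\<lambda>s. fp (Xf s)) + integral {a-h..t} (\<lambda>s. fp (Xf s)))
        has_vector_derivative (f (Xf t))) (at t within {a-h..a})"
      using Pid[OF Xin[OF t]] by (simp add: fp_def)
    thus ?thesis
      by (rule has_vector_derivative_transform_within[where d=1]) (use t Xeq2 in auto)
  qed
  thus ?thesis using Xa hpos by blast
qed




definition vf :: "(real \<Rightarrow> real) \<Rightarrow> real \<times> real \<times> real \<Rightarrow> real \<times> real \<times> real" where
  "vf g y = (fst (snd y), snd (snd y) * fst y / 2 - g (fst y) * (fst y)\<^sup>2 * fst (snd y),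
             -4 * g (fst y) * (fst (snd y))\<^sup>2)"

lemma vf_cont: assumes "continuous_on UNIV g" shows "continuous_on UNIV (vf g)"
proof -
  have g1: "continuous_on UNIV (\<lambda>y::real\<times>real\<times>real. g (fst y))"
    by (rule continuous_on_compose2[OF assms]) (auto intro!: continuous_intros)
  show ?thesis unfolding vf_def by (intro continuous_intros g1) auto
qed

lemma prod_diff_bound:
  fixes a1 a2 b1 b2 :: real
  shows "\<bar>a1 * b1 - a2 * b2\<bar> \<le> \<bar>a1 - a2\<bar> * \<bar>b1\<bar> + \<bar>a2\<bar> * \<bar>b1 - b2\<bar>"
proof -
  have "a1 * b1 - a2 * b2 = (a1 - a2) * b1 + a2 * (b1 - b2)" by (simp add: algebra_simps)
  hence "\<bar>a1 * b1 - a2 * b2\<bar> \<le> \<bar>(a1 - a2) * b1\<bar> + \<bar>a2 * (b1 - b2)\<bar>" by (metis abs_triangle_ineq)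
  thus ?thesis by (simp add: abs_mult)
qed

lemma prod_diff_bound2:
  fixes a1 a2 b1 b2 A B da db :: real
  assumes "\<bar>a1 - a2\<bar> \<le> da" "\<bar>b1 - b2\<bar> \<le> db" "\<bar>b1\<bar> \<le> B" "\<bar>a2\<bar> \<le> A"
  shows "\<bar>a1 * b1 - a2 * b2\<bar> \<le> da * B + A * db"
proof -
  have "\<bar>a1 - a2\<bar> * \<bar>b1\<bar> \<le> da * B" using assms by (intro mult_mono) auto
  moreover have "\<bar>a2\<bar> * \<bar>b1 - b2\<bar> \<le> A * db" using assms by (intro mult_mono) auto
  ultimately show ?thesis using prod_diff_bound[of a1 b1 a2 b2] by linarith
qed

lemma sq_abs_le: "\<bar>x::real\<bar> \<le> R \<Longrightarrow> \<bar>x\<^sup>2\<bar> \<le> R\<^sup>2"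
proof -
  assume "\<bar>x\<bar> \<le> R"
  hence "\<bar>x\<bar>\<^sup>2 \<le> R\<^sup>2" by (intro power_mono) auto
  thus ?thesis by simp
qed

lemma norm_triple_le: "norm ((a::real, b::real, c::real)) \<le> \<bar>a\<bar> + \<bar>b\<bar> + \<bar>c\<bar>"
proof -
  have "norm (a, b, c) \<le> norm a + norm (b, c)" by (rule norm_Pair_le)
  also have "norm (b, c) \<le> norm b + norm c" by (rule norm_Pair_le)
  finally show ?thesis by simp
qed

lemma comp_le_norm:
  fixes y :: "real \<times> real \<times> real"
  shows "\<bar>fst y\<bar> \<le> norm y" "\<bar>fst (snd y)\<bar> \<le> norm y" "\<bar>snd (snd y)\<bar> \<le> norm y"
proof -
  obtain x p e where y: "y = (x, p, e)" by (cases y) auto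
  show "\<bar>fst y\<bar> \<le> norm y" unfolding y using norm_fst_le[of x "(p, e)"] by simp
  have "norm (p, e) \<le> norm y" unfolding y by (rule norm_snd_le)
  thus "\<bar>fst (snd y)\<bar> \<le> norm y" "\<bar>snd (snd y)\<bar> \<le> norm y"
    using norm_fst_le[of p e] norm_snd_le[of e p] unfolding y by auto
qed

lemma lin_comb:
  fixes A B C D E P d q1 q2 q3 :: real
  shows "A \<le> B / 2 + C \<Longrightarrow> D = 4 * E \<Longrightarrow> P \<le> d \<Longrightarrow> C \<le> q1 \<Longrightarrow> B \<le> q2 \<Longrightarrow> E \<le> q3 \<Longrightarrow>
    P + A + D \<le> d + (q2 / 2 + q1) + 4 * q3"
  by linarith

lemma vf_lip:
  fixes g :: "real \<Rightarrow> real" and R M K :: real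
  assumes R: "R \<ge> 0" and M: "M \<ge> 0" and K: "K \<ge> 0"
    and gb: "\<And>x. \<bar>x\<bar> \<le> R \<Longrightarrow> \<bar>g x\<bar> \<le> M"
    and gl: "\<And>x y. \<bar>x\<bar> \<le> R \<Longrightarrow> \<bar>y\<bar> \<le> R \<Longrightarrow> \<bar>g x - g y\<bar> \<le> K * \<bar>x - y\<bar>"
  shows "\<exists>C. \<forall>y1 y2. norm y1 \<le> R \<longrightarrow> norm y2 \<le> R \<longrightarrow> norm (vf g y1 - vf g y2) \<le> C * norm (y1 - y2)"
proof -
  define C where "C = 1 + R + (K * R\<^sup>2 + M * (2 * R)) * R + M * R\<^sup>2 + 4 * (K * R\<^sup>2 + M * (2 * R))"
  have "norm (vf g y1 - vf g y2) \<le> (3 * C) * norm (y1 - y2)" if n1: "norm y1 \<le> R" and n2: "norm y2 \<le> R" for y1 y2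
  proof -
    obtain x1 p1 e1 where y1: "y1 = (x1, p1, e1)" by (cases y1) auto
    obtain x2 p2 e2 where y2: "y2 = (x2, p2, e2)" by (cases y2) auto
    define d where "d = norm (y1 - y2)"
    have b1: "\<bar>x1\<bar> \<le> R" "\<bar>p1\<bar> \<le> R" "\<bar>e1\<bar> \<le> R" using comp_le_norm[of y1] n1 unfolding y1 by auto
    have b2: "\<bar>x2\<bar> \<le> R" "\<bar>p2\<bar> \<le> R" "\<bar>e2\<bar> \<le> R" using comp_le_norm[of y2] n2 unfolding y2 by auto
    have dx: "\<bar>x1 - x2\<bar> \<le> d" and dp: "\<bar>p1 - p2\<bar> \<le> d" and de: "\<bar>e1 - e2\<bar> \<le> d"
      using comp_le_norm[of "y1 - y2"] unfolding d_def y1 y2 by auto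
    have d0: "d \<ge> 0" unfolding d_def by simp
    have g1: "\<bar>g x1\<bar> \<le> M" and g2: "\<bar>g x2\<bar> \<le> M" using gb b1 b2 by auto
    have gd: "\<bar>g x1 - g x2\<bar> \<le> K * d" using gl[OF b1(1) b2(1)] mult_left_mono[OF dx K] by linarith
    have xsq1: "\<bar>x1\<^sup>2\<bar> \<le> R\<^sup>2" using b1 by (intro sq_abs_le) auto
    have xsq2: "\<bar>x2\<^sup>2\<bar> \<le> R\<^sup>2" using b2 by (intro sq_abs_le) auto
    have psq1: "\<bar>p1\<^sup>2\<bar> \<le> R\<^sup>2" using b1 by (intro sq_abs_le) auto
    have xsqd: "\<bar>x1\<^sup>2 - x2\<^sup>2\<bar> \<le> d * R + R * d"
      using prod_diff_bound2[OF dx dx b1(1) b2(1)] by (simp add: power2_eq_square)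
    have psqd: "\<bar>p1\<^sup>2 - p2\<^sup>2\<bar> \<le> d * R + R * d"
      using prod_diff_bound2[OF dp dp b1(2) b2(2)] by (simp add: power2_eq_square)
    have gx: "\<bar>g x1 * x1\<^sup>2 - g x2 * x2\<^sup>2\<bar> \<le> K * d * R\<^sup>2 + M * (d * R + R * d)"
      by (rule prod_diff_bound2[OF gd xsqd xsq1 g2])
    have gxb2: "\<bar>g x2 * x2\<^sup>2\<bar> \<le> M * R\<^sup>2" using g2 xsq2 M by (simp add: abs_mult mult_mono)
    have c2a: "\<bar>g x1 * x1\<^sup>2 * p1 - g x2 * x2\<^sup>2 * p2\<bar> \<le> (K * d * R\<^sup>2 + M * (d * R + R * d)) * R + M * R\<^sup>2 * d"
      by (rule prod_diff_bound2[OF gx dp b1(2) gxb2])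
    have c2b: "\<bar>e1 * x1 - e2 * x2\<bar> \<le> d * R + R * d"
      by (rule prod_diff_bound2[OF de dx b1(1) b2(3)])
    have c3: "\<bar>g x1 * p1\<^sup>2 - g x2 * p2\<^sup>2\<bar> \<le> K * d * R\<^sup>2 + M * (d * R + R * d)"
      by (rule prod_diff_bound2[OF gd psqd psq1 g2])
    have "vf g y1 - vf g y2 = (p1 - p2, (e1 * x1 - e2 * x2) / 2 - (g x1 * x1\<^sup>2 * p1 - g x2 * x2\<^sup>2 * p2),
        -4 * (g x1 * p1\<^sup>2 - g x2 * p2\<^sup>2))"
      unfolding vf_def y1 y2 by (simp add: algebra_simps diff_divide_distrib)
    note veq = this
    have "norm (vf g y1 - vf g y2) \<le> \<bar>p1 - p2\<bar> + \<bar>(e1 * x1 - e2 * x2) / 2 - (g x1 * x1\<^sup>2 * p1 - g x2 * x2\<^sup>2 * p2)\<bar>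
        + \<bar>-4 * (g x1 * p1\<^sup>2 - g x2 * p2\<^sup>2)\<bar>"
      unfolding veq by (rule norm_triple_le)
    also have "\<dots> \<le> d + ((d * R + R * d) / 2 + ((K * d * R\<^sup>2 + M * (d * R + R * d)) * R + M * R\<^sup>2 * d))
        + 4 * (K * d * R\<^sup>2 + M * (d * R + R * d))"
    proof -
      have "\<bar>(e1 * x1 - e2 * x2) / 2 - (g x1 * x1\<^sup>2 * p1 - g x2 * x2\<^sup>2 * p2)\<bar>
          \<le> \<bar>e1 * x1 - e2 * x2\<bar> / 2 + \<bar>g x1 * x1\<^sup>2 * p1 - g x2 * x2\<^sup>2 * p2\<bar>"
        using abs_triangle_ineq4[of "(e1 * x1 - e2 * x2) / 2" "g x1 * x1\<^sup>2 * p1 - g x2 * x2\<^sup>2 * p2"] by simp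
      moreover have "\<bar>-4 * (g x1 * p1\<^sup>2 - g x2 * p2\<^sup>2)\<bar> = 4 * \<bar>g x1 * p1\<^sup>2 - g x2 * p2\<^sup>2\<bar>" by (simp only: abs_mult)
      ultimately show ?thesis using lin_comb[OF _ _ dp c2a c2b c3] by blast
    qed
    also have "\<dots> = d * (1 + R + (K * R\<^sup>2 + M * (2 * R)) * R + M * R\<^sup>2 + 4 * (K * R\<^sup>2 + M * (2 * R)))"
      by (simp add: algebra_simps)
    also have "\<dots> = d * C" unfolding C_def ..
    also have "\<dots> \<le> d * (3 * C)"
    proof -
      have "C \<ge> 0" unfolding C_def using R M K by (intro add_nonneg_nonneg mult_nonneg_nonneg) auto
      thus ?thesis using d0 by (intro mult_left_mono) auto
    qed
    finally show ?thesis unfolding d_def by (simp add: mult.commute)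
  qed
  thus ?thesis by blast
qed




lemma deriv_mono:
  fixes F F' :: "real \<Rightarrow> real"
  assumes d: "\<And>x. x \<in> S \<Longrightarrow> (F has_real_derivative F' x) (at x within S)"
    and p: "\<And>x. x \<in> S \<Longrightarrow> 0 \<le> F' x" and sub: "{s..t} \<subseteq> S" and st: "s \<le> t"
  shows "F s \<le> F t"
proof (rule DERIV_nonneg_imp_increasing_open[OF st])
  fix x assume x: "s < x" "x < t"
  have "at x within S = at x"
    by (rule at_within_open_subset[of _ "{s<..<t}"]) (use x sub in auto)
  have xS: "x \<in> S" using x sub by auto
  hence "(F has_real_derivative F' x) (at x)" using d[of x] \<open>at x within S = at x\<close> by simp
  thus "\<exists>y. (F has_real_derivative y) (at x) \<and> 0 \<le> y" using p[OF xS] by auto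
next
  have "continuous (at x within {s..t}) F" if "x \<in> {s..t}" for x
    using DERIV_continuous[OF d[of x]] that sub continuous_within_subset by blast
  thus "continuous_on {s..t} F" by (simp add: continuous_on_eq_continuous_within)
qed

lemma at_within_loc:
  fixes x :: real
  assumes "x \<in> V" "open V" "T \<inter> V = S \<inter> V"
  shows "at x within T = at x within S"
  by (rule at_within_nhd[OF assms(1,2)]) (use assms(3) in blast)

lemma upper_int_deriv:
  fixes q :: "real \<Rightarrow> real"
  assumes qc: "continuous_on {b..c} q" and s: "b < s" "s \<le> c"
  shows "((\<lambda>x. integral {x..c} q) has_real_derivative (- q s)) (at s within {b<..c})"
proof -
  have int: "q integrable_on {b..c}" by (rule integrable_continuous_real[OF qc])
  have eq: "integral {x..c} q = integral {b..c} q - integral {b..x} q" if "x \<in> {b..c}" for x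
  proof -
    have "integral {b..x} q + integral {x..c} q = integral {b..c} q"
      by (rule Henstock_Kurzweil_Integration.integral_combine) (use that int in auto)
    thus ?thesis by (simp add: algebra_simps)
  qed
  have "((\<lambda>x. integral {b..c} q - integral {b..x} q) has_real_derivative (0 - q s)) (at s within {b..c})"
    by (intro derivative_intros integral_has_real_derivative qc) (use s in auto)
  hence "((\<lambda>x. integral {b..c} q - integral {b..x} q) has_real_derivative (- q s)) (at s within {b..c})"
    by simp
  hence "((\<lambda>x. integral {x..c} q) has_real_derivative (- q s)) (at s within {b..c})"
    by (rule has_field_derivative_transform_within[where d=1]) (use s eq[symmetric] in auto)
  thus ?thesis by (rule DERIV_subset) auto
qed

lemma comps_deriv:
  fixes Z :: "real \<Rightarrow> real \<times> real \<times> real"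
  assumes "(Z has_vector_derivative w) F"
  shows "((\<lambda>t. fst (Z t)) has_real_derivative fst w) F"
    "((\<lambda>t. fst (snd (Z t))) has_real_derivative fst (snd w)) F"
    "((\<lambda>t. snd (snd (Z t))) has_real_derivative snd (snd w)) F"
proof -
  have Zd: "(Z has_derivative (\<lambda>h. h *\<^sub>R w)) F" using assms by (simp add: has_vector_derivative_def)
  have "((\<lambda>t. fst (Z t)) has_derivative (\<lambda>h. fst (h *\<^sub>R w))) F"
    by (rule has_derivative_fst[OF Zd])
  thus "((\<lambda>t. fst (Z t)) has_real_derivative fst w) F"
    by (simp add: has_real_derivative_iff_has_vector_derivative has_vector_derivative_def)
  have "((\<lambda>t. fst (snd (Z t))) has_derivative (\<lambda>h. fst (snd (h *\<^sub>R w)))) F"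
    by (rule has_derivative_fst[OF has_derivative_snd[OF Zd]])
  thus "((\<lambda>t. fst (snd (Z t))) has_real_derivative fst (snd w)) F"
    by (simp add: has_real_derivative_iff_has_vector_derivative has_vector_derivative_def)
  have "((\<lambda>t. snd (snd (Z t))) has_derivative (\<lambda>h. snd (snd (h *\<^sub>R w)))) F"
    by (rule has_derivative_snd[OF has_derivative_snd[OF Zd]])
  thus "((\<lambda>t. snd (snd (Z t))) has_real_derivative snd (snd w)) F"
    by (simp add: has_real_derivative_iff_has_vector_derivative has_vector_derivative_def)
qed

lemma triple_deriv:
  assumes "(f1 has_real_derivative d1) (at x within S)" "(f2 has_real_derivative d2) (at x within S)"
    "(f3 has_real_derivative d3) (at x within S)"
  shows "((\<lambda>t. (f1 t, f2 t, f3 t)) has_vector_derivative (d1, d2, d3)) (at x within S)"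
proof -
  have *: "(f has_real_derivative d) (at x within S) \<Longrightarrow> (f has_derivative (\<lambda>h. h * d)) (at x within S)" for f d
    by (simp add: has_field_derivative_def mult_commute_abs)
  have "((\<lambda>t. (f1 t, f2 t, f3 t)) has_derivative (\<lambda>h. (h * d1, h * d2, h * d3))) (at x within S)"
    by (intro has_derivative_Pair *[OF assms(1)] *[OF assms(2)] *[OF assms(3)])
  thus ?thesis by (simp add: has_vector_derivative_def)
qed

lemma vec_lip:
  fixes Y :: "real \<Rightarrow> 'a::real_normed_vector"
  assumes "convex S" "\<And>x. x \<in> S \<Longrightarrow> (Y has_vector_derivative Y' x) (at x within S)"
    "\<And>x. x \<in> S \<Longrightarrow> norm (Y' x) \<le> B" "x \<in> S" "y \<in> S"
  shows "norm (Y x - Y y) \<le> B * \<bar>x - y\<bar>"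
proof -
  have "norm (Y x - Y y) \<le> B * norm (x - y)"
  proof (rule differentiable_bound[OF assms(1) _ _ assms(4,5)])
    fix z assume z: "z \<in> S"
    show "(Y has_derivative (\<lambda>h. h *\<^sub>R Y' z)) (at z within S)"
      using assms(2)[OF z] by (simp add: has_vector_derivative_def)
    show "onorm (\<lambda>h. h *\<^sub>R Y' z) \<le> B"
      using onorm_scaleR_left[of "\<lambda>h::real. h" "Y' z"] assms(3)[OF z]
      by (simp add: onorm_id)
  qed
  thus ?thesis by simp
qed


locale dsol = dsys +
  fixes A :: ereal and u u' E u'' :: "real \<Rightarrow> real"
  assumes A0: "A < 0"
    and ode: "\<And>s. s \<in> lint A \<Longrightarrow> (u has_real_derivative u' s) (at s within lint A) \<and>
        (u' has_real_derivative u'' s) (at s within lint A) \<and>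
        (E has_real_derivative (-4 * dsq \<delta> (u s) * (u' s)\<^sup>2)) (at s within lint A) \<and>
        u'' s + dsq \<delta> (u s) * (u s)\<^sup>2 * u' s = E s * u s / 2"
    and onM: "\<And>s. s \<in> lint A \<Longrightarrow> 2 * (u' s)\<^sup>2 - E s * (u s)\<^sup>2 = 1"
    and fin: "(\<integral>\<^sup>+ s\<in>lint A. ennreal ((u s)\<^sup>2) \<partial>lborel) < \<infinity>"
begin

lemma S0: "0 \<in> lint A" using A0 by (simp add: lint_def zero_ereal_def)
lemma Sle: "s \<in> lint A \<Longrightarrow> s \<le> 0" by (simp add: lint_def)
lemma Sint: "s \<in> lint A \<Longrightarrow> t \<le> 0 \<Longrightarrow> {s..t} \<subseteq> lint A"
  by (auto simp: lint_def) (meson ereal_less_eq(3) less_le_trans)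

lemma du: "s \<in> lint A \<Longrightarrow> (u has_real_derivative u' s) (at s within lint A)" using ode by blast
lemma du': "s \<in> lint A \<Longrightarrow> (u' has_real_derivative u'' s) (at s within lint A)" using ode by blast
lemma dE: "s \<in> lint A \<Longrightarrow> (E has_real_derivative (-4 * dsq \<delta> (u s) * (u' s)\<^sup>2)) (at s within lint A)"
  using ode by blast
lemma eqn: "s \<in> lint A \<Longrightarrow> u'' s = E s * u s / 2 - dsq \<delta> (u s) * (u s)\<^sup>2 * u' s"
  using ode[of s] by (simp add: algebra_simps)

lemma cont_of_deriv: "(\<And>s. s \<in> lint A \<Longrightarrow> (f has_real_derivative f' s) (at s within lint A)) \<Longrightarrow> continuous_on (lint A) f"
  using DERIV_continuous continuous_on_eq_continuous_within by blast

lemma ucont: "continuous_on (lint A) u" by (rule cont_of_deriv[OF du])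
lemma u'cont: "continuous_on (lint A) u'" by (rule cont_of_deriv[OF du'])
lemma Econt: "continuous_on (lint A) E" by (rule cont_of_deriv[OF dE])
lemma qcont: "continuous_on (lint A) (\<lambda>t. (u t)\<^sup>2)" by (intro continuous_intros ucont)

lemma g_nonneg: "0 \<le> dsq \<delta> x" using g_bounds by blast

lemma Emono: "s \<in> lint A \<Longrightarrow> t \<le> 0 \<Longrightarrow> s \<le> t \<Longrightarrow> E t \<le> E s"
proof -
  assume st: "s \<in> lint A" "t \<le> 0" "s \<le> t"
  have "- E s \<le> - E t"
  proof (rule deriv_mono[OF _ _ Sint[OF st(1,2)] st(3)])
    fix x assume "x \<in> lint A"
    thus "((\<lambda>x. - E x) has_real_derivative - (-4 * dsq \<delta> (u x) * (u' x)\<^sup>2)) (at x within lint A)"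
      by (intro derivative_intros dE)
    show "0 \<le> - (-4 * dsq \<delta> (u x) * (u' x)\<^sup>2)" using g_nonneg[of "u x"] by simp
  qed
  thus ?thesis by simp
qed

lemma E0: "s \<in> lint A \<Longrightarrow> E 0 \<le> E s" using Emono[of s 0] Sle by auto

definition Rf where "Rf s = integral {s..0} (\<lambda>t. (u t)\<^sup>2)"

lemma Rderiv: assumes s: "s \<in> lint A" shows "(Rf has_real_derivative - (u s)\<^sup>2) (at s within lint A)"
proof -
  have "A < ereal s" using s by (simp add: lint_def)
  then obtain b where b: "A < ereal b" "ereal b < ereal s" using ereal_dense2 by blast
  have bs: "b < s" using b by simp
  have s0: "s \<le> 0" using Sle[OF s] .
  have bS: "b \<in> lint A" using b bs s0 by (simp add: lint_def)
  have "(Rf has_real_derivative - (u s)\<^sup>2) (at s within {b<..0})"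
    unfolding Rf_def[abs_def]
    by (rule upper_int_deriv[OF continuous_on_subset[OF qcont Sint[OF bS]] bs s0]) simp
  moreover have "at s within {b<..0} = at s within lint A"
  proof (rule at_within_loc[of _ "{b<..}"])
    show "s \<in> {b<..}" "open {b<..}" using bs by auto
    show "{b<..0} \<inter> {b<..} = lint A \<inter> {b<..}"
    proof -
      have "\<And>x. b < x \<Longrightarrow> A < ereal x" using b(1) by (metis less_ereal.simps(1) less_trans)
      thus ?thesis by (auto simp: lint_def)
    qed
  qed
  ultimately show ?thesis by simp
qed

lemma Rnonneg: "s \<in> lint A \<Longrightarrow> 0 \<le> Rf s"
  unfolding Rf_def
  by (rule Henstock_Kurzweil_Integration.integral_nonneg, rule integrable_continuous_real,
      rule continuous_on_subset[OF qcont Sint]) auto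

lemma R0: "Rf 0 = 0" by (simp add: Rf_def)

lemma Rbound: "\<exists>J. \<forall>s\<in>lint A. Rf s \<le> J"
proof -
  define T where "T = (\<integral>\<^sup>+ s\<in>lint A. ennreal ((u s)\<^sup>2) \<partial>lborel)"
  have "Rf s \<le> enn2real T" if s: "s \<in> lint A" for s
  proof -
    have "((\<lambda>t. (u t)\<^sup>2) has_integral Rf s) {s..0}"
      unfolding Rf_def
      by (rule integrable_integral, rule integrable_continuous_real, rule continuous_on_subset[OF qcont Sint[OF s]]) simp
    hence "(\<integral>\<^sup>+ t. ennreal ((u t)\<^sup>2) * indicator {s..0} t \<partial>lborel) = ennreal (Rf s)"
      by (intro nn_integral_has_integral_lebesgue') auto
    moreover have "(\<integral>\<^sup>+ t. ennreal ((u t)\<^sup>2) * indicator {s..0} t \<partial>lborel) \<le> T"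
      unfolding T_def
    proof (intro nn_integral_mono)
      fix x
      have "x \<in> {s..0} \<Longrightarrow> x \<in> lint A" using Sint[OF s, of 0] by auto
      thus "ennreal ((u x)\<^sup>2) * indicator {s..0} x \<le> ennreal ((u x)\<^sup>2) * indicator (lint A) x"
        by (auto simp: indicator_def)
    qed
    ultimately have "ennreal (Rf s) \<le> T" by simp
    hence "enn2real (ennreal (Rf s)) \<le> enn2real T" using fin T_def by (intro enn2real_mono) auto
    thus ?thesis using Rnonneg[OF s] by simp
  qed
  thus ?thesis by blast
qed

definition Yf where "Yf s = (u s, u' s, E s)"

lemma Yderiv: assumes s: "s \<in> lint A" shows "(Yf has_vector_derivative vf (dsq \<delta>) (Yf s)) (at s within lint A)"
proof -
  have "(Yf has_vector_derivative (u' s, u'' s, -4 * dsq \<delta> (u s) * (u' s)\<^sup>2)) (at s within lint A)"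
    unfolding Yf_def[abs_def] by (rule triple_deriv[OF du[OF s] du'[OF s] dE[OF s]])
  moreover have "vf (dsq \<delta>) (Yf s) = (u' s, u'' s, -4 * dsq \<delta> (u s) * (u' s)\<^sup>2)"
    by (simp add: vf_def Yf_def eqn[OF s])
  ultimately show ?thesis by simp
qed

end

lemma deriv_eq: "(f has_real_derivative X) F \<Longrightarrow> X = Y \<Longrightarrow> (f has_real_derivative Y) F" by simp

context dsol begin

lemma infinite_case: assumes Ainf: "A = -\<infinity>" shows False
proof -
  have Sall: "s \<in> lint A" if "s \<le> 0" for s using that by (simp add: lint_def Ainf)
  define kf where "kf r = dsq \<delta> (sqrt \<bar>r\<bar>) * max r 0" for r
  have c1: "continuous_on UNIV (\<lambda>r. dsq \<delta> (sqrt \<bar>r\<bar>))"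
    by (rule continuous_on_compose2[OF g_cont_on[of UNIV]]) (auto intro!: continuous_intros)
  have kfc: "continuous_on UNIV kf" unfolding kf_def by (intro continuous_intros c1)
  have kfnn: "0 \<le> kf r" for r unfolding kf_def using g_nonneg by simp
  have kfsq: "kf (x\<^sup>2) = dsq \<delta> x * x\<^sup>2" for x
  proof -
    have "sqrt \<bar>x\<^sup>2\<bar> = \<bar>x\<bar>" by simp
    thus ?thesis unfolding kf_def using g_even[of x] by simp
  qed
  define Kf where "Kf y = integral {-1..y} kf" for y
  have Kd: "(Kf has_real_derivative kf y) (at y)" if y: "y \<ge> 0" for y
  proof -
    have "(Kf has_real_derivative kf y) (at y within {-1..y+1})"
      unfolding Kf_def[abs_def]
      by (rule integral_has_real_derivative[OF continuous_on_subset[OF kfc]]) (use y in auto)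
    moreover have "at y within {-1..y+1} = at y"
      by (rule at_within_open_subset[of _ "{-1<..<y+1}"]) (use y in auto)
    ultimately show ?thesis by simp
  qed
  define Gf where "Gf x = Kf (x\<^sup>2) / 2" for x
  have Gd: "(Gf has_real_derivative dsq \<delta> x * x ^ 3) (at x)" for x
  proof -
    have "((\<lambda>x. Kf (x\<^sup>2)) has_real_derivative kf (x\<^sup>2) * (2 * x)) (at x)"
      by (rule DERIV_chain2[OF Kd]) (auto intro!: derivative_eq_intros)
    hence "(Gf has_real_derivative kf (x\<^sup>2) * (2 * x) / 2) (at x)"
      unfolding Gf_def[abs_def] by (rule DERIV_cdivide)
    moreover have "kf (x\<^sup>2) * (2 * x) / 2 = dsq \<delta> x * x ^ 3"
      unfolding kfsq by (simp add: power2_eq_square power3_eq_cube)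
    ultimately show ?thesis by simp
  qed
  have Gnn: "0 \<le> Gf x" for x
  proof -
    have "0 \<le> Kf (x\<^sup>2)" unfolding Kf_def
      by (rule Henstock_Kurzweil_Integration.integral_nonneg, rule integrable_continuous_real,
          rule continuous_on_subset[OF kfc]) (auto simp: kfnn)
    thus ?thesis by (simp add: Gf_def)
  qed
  define Phi where "Phi s = u s * u' s + Gf (u s)" for s
  have Phid: "(Phi has_real_derivative 1/2 + E s * (u s)\<^sup>2) (at s within lint A)" if s: "s \<in> lint A" for s
  proof -
    have h: "(Phi has_real_derivative (u' s * u' s + u'' s * u s + dsq \<delta> (u s) * (u s) ^ 3 * u' s)) (at s within lint A)"
      unfolding Phi_def[abs_def]
      by (intro DERIV_add DERIV_mult DERIV_chain2[OF Gd] du[OF s] du'[OF s])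
    have o: "2 * (u' s * u' s) - E s * (u s * u s) = 1" using onM[OF s] by (simp add: power2_eq_square)
    have "u' s * u' s + u'' s * u s + dsq \<delta> (u s) * (u s) ^ 3 * u' s = u' s * u' s + E s * (u s * u s) / 2"
      unfolding eqn[OF s] by (simp add: algebra_simps power2_eq_square power3_eq_cube)
    also have "\<dots> = 1/2 + E s * (u s)\<^sup>2" using o by (simp add: power2_eq_square)
    finally show ?thesis using h by simp
  qed
  define c where "c = \<bar>E 0\<bar>"
  obtain J where J: "\<And>s. s \<in> lint A \<Longrightarrow> Rf s \<le> J" using Rbound by blast
  have J0: "0 \<le> J" using J[OF S0] R0 by simp
  define W where "W s = Phi s - s / 2 - c * Rf s" for s
  have Wle: "W s \<le> W 0" if s: "s \<le> 0" for s
  proof (rule deriv_mono[OF _ _ Sint[OF Sall[OF s]] s])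
    fix x assume x: "x \<in> lint A"
    show "(W has_real_derivative (1/2 + E x * (u x)\<^sup>2) - 1/2 - c * (- (u x)\<^sup>2)) (at x within lint A)"
      unfolding W_def[abs_def]
      by (intro DERIV_diff DERIV_cmult Phid[OF x] Rderiv[OF x] DERIV_cdivide[of "\<lambda>x. x" 1, simplified] DERIV_ident)
    have "- c \<le> E x" using E0[OF x] unfolding c_def by linarith
    hence "0 \<le> (E x + c) * (u x)\<^sup>2" by simp
    thus "0 \<le> (1/2 + E x * (u x)\<^sup>2) - 1/2 - c * (- (u x)\<^sup>2)" by (simp add: algebra_simps)
  qed simp
  have Phib: "Phi s \<le> \<bar>Phi 0\<bar> + s / 2 + c * J" if s: "s \<le> 0" for s
  proof -
    have "W s \<le> Phi 0" using Wle[OF s] by (simp add: W_def R0)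
    moreover have "c * Rf s \<le> c * J" using J[OF Sall[OF s]] by (intro mult_left_mono) (auto simp: c_def)
    ultimately show ?thesis unfolding W_def by linarith
  qed
  define s1 where "s1 = -2 * (\<bar>Phi 0\<bar> + c * J + 1)"
  have cJ: "0 \<le> c * J" using J0 by (simp add: c_def)
  have P1: "1 \<le> \<bar>Phi 0\<bar> + c * J + 1" using cJ abs_ge_zero[of "Phi 0"] by linarith
  have s1neg: "s1 \<le> -2" unfolding s1_def using mult_left_mono[OF P1, of 2] by linarith
  have uu': "u s * u' s \<le> -1" if s: "s \<le> s1" for s
  proof -
    have "Phi s \<le> \<bar>Phi 0\<bar> + s / 2 + c * J" using Phib[of s] s s1neg by simp
    also have "\<dots> \<le> -1" using s unfolding s1_def by simp
    finally show ?thesis using Gnn[of "u s"] unfolding Phi_def by linarith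
  qed
  have usq: "2 * (s1 - t) \<le> (u t)\<^sup>2" if t: "t \<le> s1" for t
  proof -
    have "- ((u t)\<^sup>2 + 2 * t) \<le> - ((u s1)\<^sup>2 + 2 * s1)"
    proof (rule deriv_mono[where S="{..s1}" and F="\<lambda>x. - ((u x)\<^sup>2 + 2 * x)" and F'="\<lambda>x. - (2 * u x * u' x + 2)"])
      fix x assume x: "x \<in> {..s1}"
      hence xS: "x \<in> lint A" using Sall s1neg by auto
      have "((\<lambda>x. - ((u x)\<^sup>2 + 2 * x)) has_real_derivative - (2 * u x * u' x + 2)) (at x within lint A)"
        by (rule derivative_eq_intros refl du[OF xS] | simp)+
      thus "((\<lambda>x. - ((u x)\<^sup>2 + 2 * x)) has_real_derivative - (2 * u x * u' x + 2)) (at x within {..s1})"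
        by (rule DERIV_subset) (use Sall s1neg in auto)
      show "0 \<le> - (2 * u x * u' x + 2)" using uu'[of x] x by simp
    qed (use t in auto)
    moreover have "0 \<le> (u s1)\<^sup>2" by simp
    ultimately show ?thesis by (smt (verit))
  qed
  define t0 where "t0 = s1 - 1 - (J + 1)"
  have t0le: "t0 \<le> s1 - 1" using J0 by (simp add: t0_def)
  have intq: "(\<lambda>t. (u t)\<^sup>2) integrable_on {a..b}" if "a \<le> b" "b \<le> 0" for a b
    by (rule integrable_continuous_real, rule continuous_on_subset[OF qcont]) (use Sall that in auto)
  have "integral {t0..s1-1} (\<lambda>t. 1::real) \<le> integral {t0..s1-1} (\<lambda>t. (u t)\<^sup>2)"
  proof (rule integral_le)
    show "(\<lambda>t. (u t)\<^sup>2) integrable_on {t0..s1-1}" by (rule intq) (use t0le s1neg in auto)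
    fix t assume "t \<in> {t0..s1-1}"
    thus "1 \<le> (u t)\<^sup>2" using usq[of t] by simp
  qed (rule Henstock_Kurzweil_Integration.integrable_const_ivl)
  also have "\<dots> \<le> integral {t0..0} (\<lambda>t. (u t)\<^sup>2)"
    by (rule integral_subset_le) (use t0le s1neg intq in auto)
  also have "\<dots> = Rf t0" by (simp add: Rf_def)
  also have "\<dots> \<le> J" using J[OF Sall] t0le s1neg by simp
  finally have "s1 - 1 - t0 \<le> J" using t0le by simp
  thus False unfolding t0_def by simp
qed

end

context dsol begin

lemma fin_Ebound: assumes Aa: "A = ereal a" shows "\<exists>Emax>0. \<forall>s\<in>lint A. E s \<le> Emax"
proof -
  obtain M where M: "M \<ge> 0" "\<And>x. 0 \<le> dsq \<delta> x \<and> dsq \<delta> x \<le> M" using g_bounds by blast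
  obtain J where J: "\<And>s. s \<in> lint A \<Longrightarrow> Rf s \<le> J" using Rbound by blast
  define C0 where "C0 = \<bar>E 0\<bar> + 1"
  define Fe where "Fe s = E s + C0" for s
  have Fe1: "1 \<le> Fe s" if "s \<in> lint A" for s using E0[OF that] unfolding Fe_def C0_def by linarith
  have EFe: "E s \<le> Fe s" for s unfolding Fe_def C0_def by simp
  define W1 where "W1 s = ln (Fe s) + 2 * M * s - 2 * M * Rf s" for s
  have W1le: "W1 s \<le> W1 0" if s: "s \<in> lint A" for s
  proof (rule deriv_mono[OF _ _ Sint[OF s] Sle[OF s]])
    fix x assume x: "x \<in> lint A"
    let ?q = "(u x)\<^sup>2"
    have dFe: "(Fe has_real_derivative (-4 * dsq \<delta> (u x) * (u' x)\<^sup>2)) (at x within lint A)"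
      unfolding Fe_def[abs_def] using DERIV_add[OF dE[OF x] DERIV_const[of C0]] by simp
    have dln: "((\<lambda>s. ln (Fe s)) has_real_derivative inverse (Fe x) * (-4 * dsq \<delta> (u x) * (u' x)\<^sup>2)) (at x within lint A)"
      by (rule DERIV_chain2[OF DERIV_ln dFe]) (use Fe1[OF x] in simp)
    show "(W1 has_real_derivative
        (inverse (Fe x) * (-4 * dsq \<delta> (u x) * (u' x)\<^sup>2) + 2 * M * 1 - 2 * M * (- ?q))) (at x within lint A)"
      unfolding W1_def[abs_def]
      by (intro DERIV_diff DERIV_add DERIV_cmult dln Rderiv[OF x] DERIV_ident)
    have X: "2 * (u' x)\<^sup>2 = 1 + E x * ?q" using onM[OF x] by simp
    have X0: "0 \<le> 2 * (u' x)\<^sup>2" by simp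
    have "E x * ?q \<le> Fe x * ?q" by (rule mult_right_mono[OF EFe]) simp
    hence XF: "2 * (u' x)\<^sup>2 \<le> Fe x * (1 + ?q)" using X Fe1[OF x] by (simp add: algebra_simps)
    have "dsq \<delta> (u x) * (2 * (u' x)\<^sup>2) \<le> M * (2 * (u' x)\<^sup>2)"
      by (rule mult_right_mono[OF _ X0]) (use M in auto)
    also have "\<dots> \<le> M * (Fe x * (1 + ?q))" by (rule mult_left_mono[OF XF M(1)])
    finally have k: "4 * dsq \<delta> (u x) * (u' x)\<^sup>2 \<le> 2 * M * (1 + ?q) * Fe x" by (simp add: algebra_simps)
    have Fp: "0 < Fe x" using Fe1[OF x] by simp
    have "inverse (Fe x) * (4 * dsq \<delta> (u x) * (u' x)\<^sup>2) \<le> inverse (Fe x) * (2 * M * (1 + ?q) * Fe x)"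
      by (rule mult_left_mono[OF k]) (use Fp in simp)
    also have "\<dots> = 2 * M * (1 + ?q)" using Fp by simp
    finally have "inverse (Fe x) * (4 * dsq \<delta> (u x) * (u' x)\<^sup>2) \<le> 2 * M * (1 + ?q)" .
    thus "0 \<le> inverse (Fe x) * (-4 * dsq \<delta> (u x) * (u' x)\<^sup>2) + 2 * M * 1 - 2 * M * (- ?q)"
      by (simp add: algebra_simps)
  qed simp
  define Lam where "Lam = ln (Fe 0) - 2 * M * a + 2 * M * J"
  have "E s \<le> exp Lam" if s: "s \<in> lint A" for s
  proof -
    have as: "a < s" using s Aa by (simp add: lint_def)
    have "ln (Fe s) + 2 * M * s - 2 * M * Rf s \<le> ln (Fe 0)" using W1le[OF s] by (simp add: W1_def R0)
    hence "ln (Fe s) \<le> ln (Fe 0) - 2 * M * s + 2 * M * Rf s" by linarith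
    also have "\<dots> \<le> Lam"
    proof -
      have "- (2 * M * s) \<le> - (2 * M * a)" using as M(1) by (simp add: mult_left_mono)
      moreover have "2 * M * Rf s \<le> 2 * M * J" using J[OF s] M(1) by (simp add: mult_left_mono)
      ultimately show ?thesis unfolding Lam_def by simp
    qed
    finally have "exp (ln (Fe s)) \<le> exp Lam" by simp
    hence "Fe s \<le> exp Lam" using Fe1[OF s] by simp
    thus ?thesis using EFe[of s] by simp
  qed
  thus ?thesis by (intro exI[of _ "exp Lam"]) auto
qed

lemma fin_ubound: assumes Aa: "A = ereal a" shows "\<exists>Q. \<forall>s\<in>lint A. (u s)\<^sup>2 \<le> Q"
proof -
  obtain Emax where Emax: "Emax > 0" "\<And>s. s \<in> lint A \<Longrightarrow> E s \<le> Emax" using fin_Ebound[OF Aa] by blast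
  define Cz where "Cz = 1 + Emax"
  define z where "z s = 1 + (u s)\<^sup>2" for s
  have z1: "1 \<le> z s" for s unfolding z_def by simp
  define W2 where "W2 s = ln (z s) + Cz * s" for s
  have W2le: "W2 s \<le> W2 0" if s: "s \<in> lint A" for s
  proof (rule deriv_mono[OF _ _ Sint[OF s] Sle[OF s]])
    fix x assume x: "x \<in> lint A"
    have dz: "(z has_real_derivative (2 * u x * u' x)) (at x within lint A)"
      unfolding z_def[abs_def] by (rule derivative_eq_intros refl du[OF x] | simp)+
    have dln: "((\<lambda>s. ln (z s)) has_real_derivative inverse (z x) * (2 * u x * u' x)) (at x within lint A)"
      by (rule DERIV_chain2[OF DERIV_ln dz]) (use z1[of x] in simp)
    show "(W2 has_real_derivative inverse (z x) * (2 * u x * u' x) + Cz * 1) (at x within lint A)"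
      unfolding W2_def[abs_def] by (intro DERIV_add DERIV_cmult dln DERIV_ident)
    have X: "2 * (u' x)\<^sup>2 = 1 + E x * (u x)\<^sup>2" using onM[OF x] by simp
    have "E x * (u x)\<^sup>2 \<le> Emax * (u x)\<^sup>2" by (rule mult_right_mono[OF Emax(2)[OF x]]) simp
    hence "2 * (u' x)\<^sup>2 \<le> 1 + Emax * (u x)\<^sup>2" using X by simp
    moreover have "- (2 * u x * u' x) \<le> (u x)\<^sup>2 + (u' x)\<^sup>2"
    proof -
      have "0 \<le> (u x + u' x)\<^sup>2" by simp
      thus ?thesis unfolding power2_sum by linarith
    qed
    moreover have "0 \<le> Emax * (u x)\<^sup>2" using Emax(1) by simp
    moreover have "Cz * z x = 1 + (u x)\<^sup>2 + Emax + Emax * (u x)\<^sup>2" by (simp add: Cz_def z_def algebra_simps)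
    ultimately have k: "- (2 * u x * u' x) \<le> Cz * z x" using Emax(1) by (smt (verit))
    have zp: "0 < z x" using z1[of x] by simp
    have "inverse (z x) * (- (2 * u x * u' x)) \<le> inverse (z x) * (Cz * z x)"
      by (rule mult_left_mono[OF k]) (use zp in simp)
    also have "\<dots> = Cz" using zp by simp
    finally show "0 \<le> inverse (z x) * (2 * u x * u' x) + Cz * 1" by simp
  qed simp
  have "(u s)\<^sup>2 \<le> exp (ln (z 0) - Cz * a)" if s: "s \<in> lint A" for s
  proof -
    have as: "a < s" using s Aa by (simp add: lint_def)
    have "ln (z s) \<le> ln (z 0) - Cz * s" using W2le[OF s] unfolding W2_def by simp
    also have "\<dots> \<le> ln (z 0) - Cz * a" using as Emax(1) unfolding Cz_def by (simp add: mult_left_mono)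
    finally have "exp (ln (z s)) \<le> exp (ln (z 0) - Cz * a)" by simp
    hence "z s \<le> exp (ln (z 0) - Cz * a)" using z1[of s] by simp
    thus ?thesis unfolding z_def by simp
  qed
  thus ?thesis by blast
qed

lemma fin_Ybound: assumes Aa: "A = ereal a" shows "\<exists>Rb. \<forall>s\<in>lint A. norm (Yf s) \<le> Rb"
proof -
  obtain Emax where Emax: "Emax > 0" "\<And>s. s \<in> lint A \<Longrightarrow> E s \<le> Emax" using fin_Ebound[OF Aa] by blast
  obtain Q where Q: "\<And>s. s \<in> lint A \<Longrightarrow> (u s)\<^sup>2 \<le> Q" using fin_ubound[OF Aa] by blast
  have absle: "\<bar>x\<bar> \<le> 1 + x\<^sup>2" for x :: real
  proof (cases "\<bar>x\<bar> \<le> 1")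
    case True thus ?thesis using zero_le_power2[of x] by linarith
  next
    case False
    have "\<bar>x\<bar> * 1 \<le> \<bar>x\<bar> * \<bar>x\<bar>" by (rule mult_left_mono) (use False in auto)
    moreover have "\<bar>x\<bar> * \<bar>x\<bar> = x\<^sup>2" by (simp add: power2_eq_square)
    ultimately show ?thesis by linarith
  qed
  have "norm (Yf s) \<le> (1 + Q) + (1 + (1 + Emax * Q) / 2) + (Emax + \<bar>E 0\<bar>)" if s: "s \<in> lint A" for s
  proof -
    have b1: "\<bar>u s\<bar> \<le> 1 + Q" using absle[of "u s"] Q[OF s] by simp
    have X: "2 * (u' s)\<^sup>2 = 1 + E s * (u s)\<^sup>2" using onM[OF s] by simp
    have "E s * (u s)\<^sup>2 \<le> Emax * (u s)\<^sup>2" by (rule mult_right_mono[OF Emax(2)[OF s]]) simp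
    also have "\<dots> \<le> Emax * Q" by (rule mult_left_mono[OF Q[OF s]]) (use Emax in simp)
    finally have "(u' s)\<^sup>2 \<le> (1 + Emax * Q) / 2" using X by simp
    hence b2: "\<bar>u' s\<bar> \<le> 1 + (1 + Emax * Q) / 2" using absle[of "u' s"] by (smt (verit))
    have b3: "\<bar>E s\<bar> \<le> Emax + \<bar>E 0\<bar>" using Emax(2)[OF s] E0[OF s] Emax(1) by linarith
    have "norm (Yf s) \<le> \<bar>u s\<bar> + \<bar>u' s\<bar> + \<bar>E s\<bar>" unfolding Yf_def by (rule norm_triple_le)
    thus ?thesis using b1 b2 b3 by (smt (verit))
  qed
  thus ?thesis by blast
qed

end

context dsol begin

lemma fin_lim: assumes Aa: "A = ereal a" shows "\<exists>ya. (Yf \<longlongrightarrow> ya) (at a within lint A)"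
proof -
  have a0: "a < 0" using A0 Aa by (simp add: zero_ereal_def)
  have Sdef: "lint A = {a<..0}" by (auto simp: lint_def Aa)
  obtain Rb where Rb: "\<And>s. s \<in> lint A \<Longrightarrow> norm (Yf s) \<le> Rb" using fin_Ybound[OF Aa] by blast
  have "bounded (vf (dsq \<delta>) ` cball 0 Rb)"
    by (intro compact_imp_bounded compact_continuous_image continuous_on_subset[OF vf_cont[OF g_cont_on]]) auto
  then obtain Bf where Bf: "\<forall>y\<in>cball 0 Rb. norm (vf (dsq \<delta>) y) \<le> Bf"
    unfolding bounded_iff by blast
  have Bd: "norm (vf (dsq \<delta>) (Yf x)) \<le> Bf" if "x \<in> lint A" for x
    using Bf Rb[OF that] by simp
  have Bf0: "0 \<le> Bf" using Bd[OF S0] norm_ge_zero order_trans by blast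
  have lip: "norm (Yf x - Yf y) \<le> Bf * \<bar>x - y\<bar>" if "x \<in> lint A" "y \<in> lint A" for x y
    by (rule vec_lip[OF _ Yderiv Bd that]) (simp add: Sdef)
  have uc: "uniformly_continuous_on (lint A) Yf"
    unfolding uniformly_continuous_on_def
  proof (intro allI impI)
    fix e :: real assume e: "e > 0"
    show "\<exists>d>0. \<forall>x\<in>lint A. \<forall>x'\<in>lint A. dist x' x < d \<longrightarrow> dist (Yf x') (Yf x) < e"
    proof (intro exI[of _ "e / (Bf + 1)"] conjI ballI impI)
      show "0 < e / (Bf + 1)" using e Bf0 by simp
      fix x x' assume xx: "x \<in> lint A" "x' \<in> lint A" "dist x' x < e / (Bf + 1)"
      have "dist (Yf x') (Yf x) \<le> Bf * \<bar>x' - x\<bar>" using lip[OF xx(2,1)] by (simp add: dist_norm)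
      also have "\<dots> \<le> Bf * (e / (Bf + 1))" using xx(3) Bf0 by (intro mult_left_mono) (auto simp: dist_real_def)
      also have "\<dots> < e"
      proof -
        have "Bf * (e / (Bf + 1)) = e * (Bf / (Bf + 1))" by simp
        also have "\<dots> < e * 1" using e Bf0 by (intro mult_strict_left_mono) auto
        finally show ?thesis by simp
      qed
      finally show "dist (Yf x') (Yf x) < e" .
    qed
  qed
  have "a \<in> closure (lint A)" using a0 by (simp add: Sdef)
  thus ?thesis using uniformly_continuous_on_extension_at_closure[OF uc] by metis
qed

end

context dsol begin

lemma fin_ext: assumes Aa: "A = ereal a"
  shows "\<exists>B v v' F. B < A \<and> ode_sol \<delta> B v v' F \<and> (\<forall>s\<in>lint A. v s = u s \<and> F s = E s)"
proof -
  have a0: "a < 0" using A0 Aa by (simp add: zero_ereal_def)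
  have Sdef: "lint A = {a<..0}" by (auto simp: lint_def Aa)
  obtain ya where ya: "(Yf \<longlongrightarrow> ya) (at a within lint A)" using fin_lim[OF Aa] by blast
  define Yt where "Yt t = (if t = a then ya else Yf t)" for t
  have Ytc: "continuous_on {a..0} Yt"
  proof -
    have "continuous (at t within {a..0}) Yt" if t: "t \<in> {a..0}" for t
    proof (cases "t = a")
      case True
      have "at a within {a..0} = at a within lint A"
        by (rule at_within_nhd[of _ UNIV]) (auto simp: Sdef)
      moreover have "(Yt \<longlongrightarrow> ya) (at a within lint A)"
        by (rule Lim_transform_eventually[OF ya]) (auto simp: eventually_at_filter Yt_def)
      ultimately show ?thesis using True by (simp add: continuous_within Yt_def)
    next
      case False
      hence ta: "t \<in> lint A" using t by (auto simp: Sdef)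
      have "at t within {a..0} = at t within lint A"
        by (rule at_within_nhd[of _ "{a<..}"]) (use t False in \<open>auto simp: Sdef\<close>)
      moreover have "continuous (at t within lint A) Yf"
        by (rule has_vector_derivative_continuous[OF Yderiv[OF ta]])
      hence "(Yf \<longlongrightarrow> Yt t) (at t within lint A)" using False by (simp add: continuous_within Yt_def)
      hence "(Yt \<longlongrightarrow> Yt t) (at t within lint A)"
        by (rule Lim_transform_eventually) (auto simp: eventually_at_filter Yt_def Sdef)
      ultimately show ?thesis by (simp add: continuous_within)
    qed
    thus ?thesis by (simp add: continuous_on_eq_continuous_within)
  qed
  define H where "H t = vf (dsq \<delta>) (Yt t)" for t
  have Hc: "continuous_on {a..0} H"
    unfolding H_def by (rule continuous_on_compose2[OF vf_cont[OF g_cont_on] Ytc]) auto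
  define Yt2 where "Yt2 t = ya + integral {a..t} H" for t
  have Yt2d: "(Yt2 has_vector_derivative H t) (at t within {a..0})" if "t \<in> {a..0}" for t
  proof -
    have "(Yt2 has_vector_derivative 0 + H t) (at t within {a..0})"
      unfolding Yt2_def[abs_def] by (intro derivative_intros integral_has_vector_derivative Hc that)
    thus ?thesis by simp
  qed
  have Yt2a: "Yt2 a = ya" by (simp add: Yt2_def)
  have Yeq: "Yf t = Yt2 t" if t: "t \<in> lint A" for t
  proof -
    have at: "a < t" "t \<le> 0" using t by (auto simp: Sdef)
    have intH: "H integrable_on {a..t}"
      by (rule integrable_continuous_real, rule continuous_on_subset[OF Hc]) (use at in auto)
    have key: "Yf t0 = Yf t - integral {a..t} H + integral {a..t0} H" if t0: "a < t0" "t0 \<le> t" for t0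
    proof -
      have "(H has_integral (Yf t - Yf t0)) {t0..t}"
      proof (rule fundamental_theorem_of_calculus[OF t0(2)])
        fix x assume x: "x \<in> {t0..t}"
        hence xS: "x \<in> lint A" using t0 at by (auto simp: Sdef)
        have "(Yf has_vector_derivative vf (dsq \<delta>) (Yf x)) (at x within {t0..t})"
          by (rule has_vector_derivative_within_subset[OF Yderiv[OF xS]]) (use t0 at in \<open>auto simp: Sdef\<close>)
        moreover have "H x = vf (dsq \<delta>) (Yf x)" using x t0 by (auto simp: H_def Yt_def)
        ultimately show "(Yf has_vector_derivative H x) (at x within {t0..t})" by simp
      qed
      hence i1: "integral {t0..t} H = Yf t - Yf t0" by (rule integral_unique)
      have i2: "integral {a..t0} H + integral {t0..t} H = integral {a..t} H"
        by (rule Henstock_Kurzweil_Integration.integral_combine[OF _ _ intH]) (use t0 in auto)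
      have "Yf t0 = Yf t - integral {t0..t} H" unfolding i1 by simp
      also have "integral {t0..t} H = integral {a..t} H - integral {a..t0} H" using i2 by (simp add: algebra_simps)
      finally show ?thesis by (simp add: algebra_simps)
    qed
    have "at a within {a<..t} = at_right a" by (rule at_within_nhd[of _ "{..<t}"]) (use at in auto)
    hence F: "at a within {a<..t} \<noteq> bot" by simp
    have l1: "(Yf \<longlongrightarrow> ya) (at a within {a<..t})"
      by (rule tendsto_within_subset[OF ya]) (use at in \<open>auto simp: Sdef\<close>)
    have "continuous (at a within {a..t}) (\<lambda>x. integral {a..x} H)"
      using indefinite_integral_continuous_1[OF intH] at by (simp add: continuous_on_eq_continuous_within)
    hence "((\<lambda>x. integral {a..x} H) \<longlongrightarrow> integral {a..a} H) (at a within {a..t})"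
      unfolding continuous_within .
    hence "((\<lambda>x. integral {a..x} H) \<longlongrightarrow> integral {a..a} H) (at a within {a<..t})"
      by (rule tendsto_within_subset) auto
    hence "((\<lambda>x. integral {a..x} H) \<longlongrightarrow> 0) (at a within {a<..t})" by simp
    hence l2: "((\<lambda>x. Yf t - integral {a..t} H + integral {a..x} H) \<longlongrightarrow> Yf t - integral {a..t} H + 0) (at a within {a<..t})"
      by (intro tendsto_intros)
    have l3: "(Yf \<longlongrightarrow> Yf t - integral {a..t} H + 0) (at a within {a<..t})"
    proof (rule Lim_transform_eventually[OF l2])
      show "\<forall>\<^sub>F x in at a within {a<..t}. Yf t - integral {a..t} H + integral {a..x} H = Yf x"
        unfolding eventually_at_filter
      proof (intro always_eventually allI impI)
        fix x assume "x \<noteq> a" "x \<in> {a<..t}"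
        thus "Yf t - integral {a..t} H + integral {a..x} H = Yf x" using key[of x] by simp
      qed
    qed
    have "ya = Yf t - integral {a..t} H + 0" using tendsto_unique[OF F l1 l3] .
    thus ?thesis by (simp add: Yt2_def)
  qed
  obtain M where M: "M \<ge> 0" "\<And>x. 0 \<le> dsq \<delta> x \<and> dsq \<delta> x \<le> M" using g_bounds by blast
  define Rp where "Rp = norm ya + 1"
  have Rp0: "Rp > 0" unfolding Rp_def by (simp add: add_nonneg_pos)
  obtain K where K: "K \<ge> 0" "\<forall>x y. \<bar>x\<bar> \<le> Rp \<longrightarrow> \<bar>y\<bar> \<le> Rp \<longrightarrow> \<bar>dsq \<delta> x - dsq \<delta> y\<bar> \<le> K * \<bar>x - y\<bar>"
    using g_lip[OF Rp0] by blast
  obtain Cl where Cl: "\<forall>y1 y2. norm y1 \<le> Rp \<longrightarrow> norm y2 \<le> Rp \<longrightarrow> norm (vf (dsq \<delta>) y1 - vf (dsq \<delta>) y2) \<le> Cl * norm (y1 - y2)"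
  proof -
    have "\<exists>C. \<forall>y1 y2. norm y1 \<le> Rp \<longrightarrow> norm y2 \<le> Rp \<longrightarrow> norm (vf (dsq \<delta>) y1 - vf (dsq \<delta>) y2) \<le> C * norm (y1 - y2)"
    proof (rule vf_lip)
      show "0 \<le> Rp" "0 \<le> M" "0 \<le> K" using Rp0 M K by auto
      show "\<bar>dsq \<delta> x\<bar> \<le> M" for x using M(2)[of x] by simp
      show "\<bar>dsq \<delta> x - dsq \<delta> y\<bar> \<le> K * \<bar>x - y\<bar>" if "\<bar>x\<bar> \<le> Rp" "\<bar>y\<bar> \<le> Rp" for x y
        using K(2) that by blast
    qed
    thus ?thesis using that by blast
  qed
  have incb: "norm y \<le> Rp" if "y \<in> cball ya 1" for y
  proof -
    have "norm y \<le> norm ya + norm (y - ya)" by (metis norm_triangle_sub add.commute)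
    thus ?thesis using that by (simp add: Rp_def dist_norm norm_minus_commute)
  qed
  have "bounded (vf (dsq \<delta>) ` cball ya 1)"
    by (intro compact_imp_bounded compact_continuous_image continuous_on_subset[OF vf_cont[OF g_cont_on]]) auto
  then obtain Bv where Bv: "\<forall>y\<in>cball ya 1. norm (vf (dsq \<delta>) y) \<le> Bv"
    unfolding bounded_iff by blast
  obtain h X where h: "h > 0" and Xa: "X a = ya"
    and Xd: "\<And>t. t \<in> {a-h..a} \<Longrightarrow> (X has_vector_derivative vf (dsq \<delta>) (X t)) (at t within {a-h..a})"
  proof -
    have "\<exists>h>0. \<exists>X. X a = ya \<and> (\<forall>t\<in>{a-h..a}. (X has_vector_derivative vf (dsq \<delta>) (X t)) (at t within {a-h..a}))"
    proof (rule picard_back[where r=1 and L=Cl and B=Bv])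
      show "(0::real) < 1" by simp
      show "norm (vf (dsq \<delta>) x - vf (dsq \<delta>) y) \<le> Cl * norm (x - y)" if "x \<in> cball ya 1" "y \<in> cball ya 1" for x y
        using Cl incb[OF that(1)] incb[OF that(2)] by blast
      show "norm (vf (dsq \<delta>) x) \<le> Bv" if "x \<in> cball ya 1" for x using Bv that by blast
    qed
    thus ?thesis using that by blast
  qed
  define Z where "Z t = (if t \<in> {a-h..a} then X t else Yt2 t)" for t
  have ZY: "Z t = Yf t" if "t \<in> lint A" for t
    using that Yeq[OF that] by (auto simp: Z_def Sdef)
  have Zd: "(Z has_vector_derivative vf (dsq \<delta>) (Z t)) (at t within {a-h..0})" if t: "t \<in> {a-h..0}" for t
  proof -
    have cT: "closure {a<..0} = {a..0}" using a0 by simp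
    have un: "{a-h..a} \<union> {a<..0} = {a-h..0}" using h a0 by auto
    have I1: "{a-h..a} \<union> (closure {a-h..a} \<inter> closure {a<..0}) = {a-h..a}" using cT by auto
    have I2: "{a<..0} \<union> (closure {a-h..a} \<inter> closure {a<..0}) = {a..0}" using cT h a0 by auto
    have I3: "closure {a-h..a} \<inter> closure {a<..0} = {a}" using cT h a0 by auto
    have "(Z has_vector_derivative (if t \<in> {a-h..a} then vf (dsq \<delta>) (X t) else H t)) (at t within {a-h..0})"
      unfolding Z_def
    proof (rule has_vector_derivative_If_within_closures[where T = "{a<..0}"])
      show "t \<in> {a-h..a} \<union> {a<..0}" using t un by auto
      show "{a-h..0} = {a-h..a} \<union> {a<..0}" using un by simp
      show "(X has_vector_derivative vf (dsq \<delta>) (X t)) (at t within {a-h..a} \<union> (closure {a-h..a} \<inter> closure {a<..0}))"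
        if "t \<in> {a-h..a} \<union> (closure {a-h..a} \<inter> closure {a<..0})" using Xd that unfolding I1 by blast
      show "(Yt2 has_vector_derivative H t) (at t within {a<..0} \<union> (closure {a-h..a} \<inter> closure {a<..0}))"
        if "t \<in> {a<..0} \<union> (closure {a-h..a} \<inter> closure {a<..0})" using Yt2d that unfolding I2 by blast
      show "X t = Yt2 t" if "t \<in> closure {a-h..a}" "t \<in> closure {a<..0}"
      proof -
        have "t \<in> closure {a-h..a} \<inter> closure {a<..0}" using that by blast
        hence "t = a" unfolding I3 by blast
        thus ?thesis using Xa Yt2a by simp
      qed
      show "vf (dsq \<delta>) (X t) = H t" if "t \<in> closure {a-h..a}" "t \<in> closure {a<..0}"
      proof -
        have "t \<in> closure {a-h..a} \<inter> closure {a<..0}" using that by blast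
        hence "t = a" unfolding I3 by blast
        thus ?thesis using Xa by (simp add: H_def Yt_def)
      qed
    qed
    moreover have "(if t \<in> {a-h..a} then vf (dsq \<delta>) (X t) else H t) = vf (dsq \<delta>) (Z t)"
    proof (cases "t \<in> {a-h..a}")
      case True thus ?thesis by (simp add: Z_def)
    next
      case False
      hence tS: "t \<in> lint A" and ta: "t \<noteq> a" using t h by (auto simp: Sdef)
      thus ?thesis using False ZY[OF tS] by (auto simp: H_def Yt_def)
    qed
    ultimately show ?thesis by simp
  qed
  define v where "v t = fst (Z t)" for t
  define v' where "v' t = fst (snd (Z t))" for t
  define F where "F t = snd (snd (Z t))" for t
  define v'' where "v'' t = fst (snd (vf (dsq \<delta>) (Z t)))" for t
  have lintB: "lint (ereal (a - h)) = {a-h<..0}" by (auto simp: lint_def)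
  have "ode_sol \<delta> (ereal (a - h)) v v' F"
    unfolding ode_sol_def
  proof
    show "ereal (a - h) < 0" using a0 h by (simp add: zero_ereal_def)
    show "\<exists>u''. \<forall>s\<in>lint (ereal (a - h)).
        (v has_real_derivative v' s) (at s within lint (ereal (a - h))) \<and>
        (v' has_real_derivative u'' s) (at s within lint (ereal (a - h))) \<and>
        (F has_real_derivative -4 * dsq \<delta> (v s) * (v' s)\<^sup>2) (at s within lint (ereal (a - h))) \<and>
        u'' s + dsq \<delta> (v s) * (v s)\<^sup>2 * v' s = F s * v s / 2"
    proof (intro exI[of _ v''] ballI conjI)
      fix s assume s: "s \<in> lint (ereal (a - h))"
      have Zs: "(Z has_vector_derivative vf (dsq \<delta>) (Z s)) (at s within lint (ereal (a - h)))"
        by (rule has_vector_derivative_within_subset[OF Zd]) (use s in \<open>auto simp: lintB\<close>)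
      note c = comps_deriv[OF Zs]
      show "(v has_real_derivative v' s) (at s within lint (ereal (a - h)))"
        using c(1) unfolding v_def[abs_def] v'_def by (simp add: vf_def)
      show "(v' has_real_derivative v'' s) (at s within lint (ereal (a - h)))"
        using c(2) unfolding v'_def[abs_def] v''_def by simp
      show "(F has_real_derivative -4 * dsq \<delta> (v s) * (v' s)\<^sup>2) (at s within lint (ereal (a - h)))"
        using c(3) unfolding F_def[abs_def] v_def v'_def by (simp add: vf_def)
      show "v'' s + dsq \<delta> (v s) * (v s)\<^sup>2 * v' s = F s * v s / 2"
        unfolding v''_def v_def v'_def F_def by (simp add: vf_def)
    qed
  qed
  moreover have "ereal (a - h) < A" using h Aa by simp
  moreover have "\<forall>s\<in>lint A. v s = u s \<and> F s = E s"
    using ZY by (simp add: v_def F_def Yf_def)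
  ultimately show ?thesis by blast
qed

end

theorem lemma9p3:
  fixes \<delta> \<delta>' :: "real \<Rightarrow> real" and A :: ereal and u u' E :: "real \<Rightarrow> real"
  assumes nonneg: "\<forall>r>0. \<delta> r \<ge> 0"
    and bdd: "bounded (\<delta> ` {0<..})"
    and deriv: "\<forall>r>0. (\<delta> has_real_derivative \<delta>' r) (at r)"
    and cont: "continuous_on {0<..} \<delta>'"
    and lim0: "((\<lambda>r. sqrt r * \<delta>' r) \<longlongrightarrow> 0) (at_right 0)"
    and sol: "ode_sol \<delta> A u u' E"
    and onM: "\<forall>s\<in>lint A. 2 * (u' s)\<^sup>2 - E s * (u s)\<^sup>2 = 1"
    and maxl: "maximal_left \<delta> A u E"
  shows "(\<integral>\<^sup>+ s\<in>lint A. ennreal ((u s)\<^sup>2) \<partial>lborel) = \<infinity>"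
proof (rule ccontr)
  assume ne: "(\<integral>\<^sup>+ s\<in>lint A. ennreal ((u s)\<^sup>2) \<partial>lborel) \<noteq> \<infinity>"
  hence fin: "(\<integral>\<^sup>+ s\<in>lint A. ennreal ((u s)\<^sup>2) \<partial>lborel) < \<infinity>" by (simp add: less_top)
  from sol obtain u'' where A0: "A < 0" and odeh: "\<forall>s\<in>lint A.
        (u has_real_derivative u' s) (at s within lint A) \<and>
        (u' has_real_derivative u'' s) (at s within lint A) \<and>
        (E has_real_derivative (-4 * dsq \<delta> (u s) * (u' s)\<^sup>2)) (at s within lint A) \<and>
        u'' s + dsq \<delta> (u s) * (u s)\<^sup>2 * u' s = E s * u s / 2"
    unfolding ode_sol_def by blast
  interpret dsol \<delta> \<delta>' A u u' E u''
  proof (unfold_locales)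
    show "\<forall>r>0. \<delta> r \<ge> 0" by (fact nonneg)
    show "bounded (\<delta> ` {0<..})" by (fact bdd)
    show "\<forall>r>0. (\<delta> has_real_derivative \<delta>' r) (at r)" by (fact deriv)
    show "continuous_on {0<..} \<delta>'" by (fact cont)
    show "((\<lambda>r. sqrt r * \<delta>' r) \<longlongrightarrow> 0) (at_right 0)" by (fact lim0)
    show "A < 0" by (fact A0)
    show "\<And>s. s \<in> lint A \<Longrightarrow> (u has_real_derivative u' s) (at s within lint A) \<and>
        (u' has_real_derivative u'' s) (at s within lint A) \<and>
        (E has_real_derivative (-4 * dsq \<delta> (u s) * (u' s)\<^sup>2)) (at s within lint A) \<and>
        u'' s + dsq \<delta> (u s) * (u s)\<^sup>2 * u' s = E s * u s / 2" using odeh by blast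
    show "\<And>s. s \<in> lint A \<Longrightarrow> 2 * (u' s)\<^sup>2 - E s * (u s)\<^sup>2 = 1" using onM by blast
    show "(\<integral>\<^sup>+ s\<in>lint A. ennreal ((u s)\<^sup>2) \<partial>lborel) < \<infinity>" by (fact fin)
  qed
  show False
  proof (cases A rule: ereal_cases)
    case (real a)
    thus False using fin_ext[OF real] maxl unfolding maximal_left_def by blast
  next
    case PInf thus False using A0 by simp
  next
    case MInf thus False using infinite_case by blast
  qed
qed

end
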